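(* Let $s_1\ge0$, $s_2\le s_1+2$ and $s_2<2s_1+3/2$. Then for all $u_0\in H^{s_1}(\mathbb{R})$, $$\|B(u_0)\|_{H^{s_2}}\lesssim\|u_0\|_{H^{s_1}}^2.$$
   Context: Fourier transform $\hat f(\xi)=(2\pi)^{-1/2}\int f(x)e^{-ix\xi}dx$. Dyadic $N\in\{1,2,4,\dots\}$; $\varphi$ even smooth, $=1$ on $[-1,1]$, $=0$ outside $[-5/4,5/4]$; $\psi_1=\varphi$, $\psi_N=\varphi(\cdot/N)-\varphi(\cdot/(N/2))$ for $N\ge2$. Fix a sufficiently large dyadic constant $C$ and write $N_1\sim N^2$ if $N^2/C\le N_1\le CN^2$, $N_1\nsim N^2$ otherwise. Define, with $\xi_2=\xi-\xi_1$, $$M(\xi,\xi_1)=\frac{1}{(2\pi)^{1/2}}\sum_{N_1\nsim N^2}\frac{\psi_{N_1}(\xi_1)\psi_N(\xi)}{\xi^3-\xi_1^2+\xi_2^2},$$ $T_M(f,g)=\mathscr{F}^{-1}_\xi\big(\int_{\mathbb{R}}M(\xi,\xi_1)\hat f(\xi_1)\widehat{\bar g}(\xi-\xi_1)\,d\xi_1\big)$, and $B(u_0)=-\partial_xT_M(u_0,u_0)$. *)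

theory Defs
  imports "HOL-Analysis.Analysis"
begin

definition phi_ok :: "(real \<Rightarrow> real) \<Rightarrow> bool" where
  "phi_ok \<phi> \<longleftrightarrow>
     (\<forall>k x. ((deriv ^^ k) \<phi>) differentiable (at x)) \<and>
     (\<forall>x. \<phi> (- x) = \<phi> x) \<and>
     (\<forall>x. \<bar>x\<bar> \<le> 1 \<longrightarrow> \<phi> x = 1) \<and>
     (\<forall>x. \<bar>x\<bar> > 5/4 \<longrightarrow> \<phi> x = 0)"

definition psi :: "(real \<Rightarrow> real) \<Rightarrow> nat \<Rightarrow> real \<Rightarrow> real" where
  "psi \<phi> k \<xi> = (if k = 0 then \<phi> \<xi>
      else \<phi> (\<xi> / 2 ^ k) - \<phi> (\<xi> / (2 ^ k / 2)))"

text \<open>N1 ~ N^2 with dyadic constant C = 2^c, N = 2^k, N1 = 2^k1.\<close>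
definition dsim :: "nat \<Rightarrow> nat \<Rightarrow> nat \<Rightarrow> bool" where
  "dsim c k k1 \<longleftrightarrow> (2::real) ^ k * 2 ^ k / 2 ^ c \<le> 2 ^ k1 \<and>
                      (2::real) ^ k1 \<le> 2 ^ c * (2 ^ k * 2 ^ k)"

definition Mmult :: "(real \<Rightarrow> real) \<Rightarrow> nat \<Rightarrow> real \<Rightarrow> real \<Rightarrow> real" where
  "Mmult \<phi> c \<xi> \<xi>1 = (1 / sqrt (2 * pi)) *
     infsum (\<lambda>(k, k1). psi \<phi> k1 \<xi>1 * psi \<phi> k \<xi> /
                       (\<xi> ^ 3 - \<xi>1 ^ 2 + (\<xi> - \<xi>1) ^ 2))
            {(k, k1). \<not> dsim c k k1}"

text \<open>Fourier transform of B(u0) expressed through v = Fourier transform of u0: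
  hat(B u0)(xi) = - i xi * int M(xi,xi1) v(xi1) hat(conj u0)(xi - xi1) dxi1,
  where hat(conj u0)(eta) = cnj (v (- eta)).\<close>
definition Bhat :: "(real \<Rightarrow> real) \<Rightarrow> nat \<Rightarrow> (real \<Rightarrow> complex) \<Rightarrow> real \<Rightarrow> complex" where
  "Bhat \<phi> c v \<xi> = - \<i> * complex_of_real \<xi> *
     (LINT \<xi>1|lborel. complex_of_real (Mmult \<phi> c \<xi> \<xi>1) * v \<xi>1 * cnj (v (\<xi>1 - \<xi>)))"

definition Hs_sq :: "real \<Rightarrow> (real \<Rightarrow> complex) \<Rightarrow> ennreal" where
  "Hs_sq s v = (\<integral>\<^sup>+ \<xi>. ennreal ((1 + \<xi>\<^sup>2) powr s * (cmod (v \<xi>))\<^sup>2) \<partial>lborel)"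

end

theory Submission
  imports Defs
begin


lemma phi_cont: assumes "phi_ok \<phi>" shows "continuous_on UNIV \<phi>"
proof -
  have "\<forall>x. \<phi> differentiable (at x)" using assms unfolding phi_ok_def
    by (metis funpow_0)
  then show ?thesis by (meson continuous_at_imp_continuous_on differentiable_imp_continuous_within)
qed

lemma phi_bdd: assumes "phi_ok \<phi>" obtains B where "\<And>x. \<bar>\<phi> x\<bar> \<le> B"
proof -
  have "compact (\<phi> ` {-5/4..5/4})"
    by (rule compact_continuous_image) (auto intro: continuous_on_subset[OF phi_cont[OF assms]])
  then obtain B where B: "\<And>y. y \<in> \<phi> ` {-5/4..5/4} \<Longrightarrow> norm y \<le> B"
    by (meson bounded_iff compact_imp_bounded)
  have "\<bar>\<phi> x\<bar> \<le> B" for x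
  proof (cases "\<bar>x\<bar> > 5/4")
    case True
    then have "\<phi> x = 0" using assms unfolding phi_ok_def by auto
    moreover have "norm (\<phi> 0) \<le> B" by (intro B) auto
    ultimately show ?thesis by simp
  next
    case False then have "x \<in> {-5/4..5/4}" by auto
    then show ?thesis using B[OF imageI] by auto
  qed
  then show ?thesis using that by blast
qed

lemma psi_nz:
  assumes "phi_ok \<phi>" "psi \<phi> k t \<noteq> 0"
  shows "\<bar>t\<bar> \<le> 5/4 * 2^k \<and> (k = 0 \<or> 2^k < 2*\<bar>t\<bar>)"
proof -
  have one: "\<And>x. \<bar>x\<bar> \<le> 1 \<Longrightarrow> \<phi> x = 1" and zero: "\<And>x. \<bar>x\<bar> > 5/4 \<Longrightarrow> \<phi> x = 0"
    using assms(1) unfolding phi_ok_def by auto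
  have p: "(0::real) < 2^k" by simp
  show ?thesis
  proof (cases "k = 0")
    case True
    then have "\<phi> t \<noteq> 0" using assms(2) by (simp add: psi_def)
    then show ?thesis using zero True by force
  next
    case False
    then have nz: "\<phi> (t / 2^k) - \<phi> (t / (2^k/2)) \<noteq> 0" using assms(2) by (simp add: psi_def)
    have a1: "\<bar>t / 2^k\<bar> = \<bar>t\<bar> / 2^k" and a2: "\<bar>t / (2^k/2)\<bar> = 2*\<bar>t\<bar> / 2^k"
      by (simp_all add: abs_divide)
    have "\<bar>t\<bar> \<le> 5/4 * 2^k"
    proof (rule ccontr)
      assume "\<not> ?thesis"
      then have "\<bar>t\<bar> / 2^k > 5/4" "2*\<bar>t\<bar> / 2^k > 5/4" using p by (simp_all add: field_simps)
      then show False using nz zero a1 a2 by auto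
    qed
    moreover have "2^k < 2*\<bar>t\<bar>"
    proof (rule ccontr)
      assume "\<not> ?thesis"
      then have "\<bar>t\<bar> / 2^k \<le> 1" "2*\<bar>t\<bar> / 2^k \<le> 1" using p by (simp_all add: field_simps)
      then show False using nz one a1 a2 by auto
    qed
    ultimately show ?thesis by simp
  qed
qed

lemma psi_bdd: assumes "\<And>x. \<bar>\<phi> x\<bar> \<le> B" shows "\<bar>psi \<phi> k t\<bar> \<le> 2*B"
  using assms[of t] assms[of "t/2^k"] assms[of "t/(2^k/2)"] unfolding psi_def by auto

definition Fs :: "(real \<Rightarrow> real) \<Rightarrow> real \<Rightarrow> nat set" where
  "Fs \<phi> t = {k. psi \<phi> k t \<noteq> 0}"

lemma Fs_sub: assumes "phi_ok \<phi>" shows "Fs \<phi> t \<subseteq> {..nat \<lceil>2*\<bar>t\<bar>\<rceil>}"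
proof
  fix k assume "k \<in> Fs \<phi> t"
  then have "k = 0 \<or> 2^k < 2*\<bar>t\<bar>" using psi_nz[OF assms] by (auto simp: Fs_def)
  moreover have "real k < 2^k" using less_exp[of k] by (metis of_nat_less_iff of_nat_numeral of_nat_power)
  ultimately have "real k \<le> 2*\<bar>t\<bar>" by (cases "k = 0") (simp, linarith)
  then have "\<lceil>real k\<rceil> \<le> \<lceil>2*\<bar>t\<bar>\<rceil>" by (rule ceiling_mono)
  then show "k \<in> {..nat \<lceil>2*\<bar>t\<bar>\<rceil>}" by (simp add: le_nat_iff)
qed

lemma Fs_finite: "phi_ok \<phi> \<Longrightarrow> finite (Fs \<phi> t)"
  using Fs_sub finite_subset by blast

lemma Fs_two: assumes "phi_ok \<phi>" "k \<in> Fs \<phi> t" "j \<in> Fs \<phi> t" "k < j" shows "j = k + 1"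
proof -
  have "\<bar>t\<bar> \<le> 5/4 * 2^k" using psi_nz[OF assms(1)] assms(2) by (auto simp: Fs_def)
  moreover have "2^j < 2*\<bar>t\<bar>" using psi_nz[OF assms(1)] assms(3,4) by (auto simp: Fs_def)
  ultimately have h: "(2::real)^j < 2^(k+2)" by simp
  have "j < k + 2" by (rule power_less_imp_less_exp[OF _ h]) simp
  then show ?thesis using assms(4) by simp
qed

lemma Fs_sum: assumes "phi_ok \<phi>" "\<And>x. \<bar>\<phi> x\<bar> \<le> B"
  shows "(\<Sum>k\<in>Fs \<phi> t. \<bar>psi \<phi> k t\<bar>) \<le> 4*B"
proof (cases "Fs \<phi> t = {}")
  case True
  have "0 \<le> B" using assms(2)[of 0] by simp
  then show ?thesis using True by simp
next
  case False
  define m where "m = Min (Fs \<phi> t)"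
  have fin: "finite (Fs \<phi> t)" using Fs_finite[OF assms(1)] .
  have mF: "m \<in> Fs \<phi> t" using Min_in[OF fin False] m_def by simp
  have sub: "Fs \<phi> t \<subseteq> {m, m+1}"
  proof
    fix j assume j: "j \<in> Fs \<phi> t"
    have "m \<le> j" using Min_le[OF fin j] m_def by simp
    then show "j \<in> {m, m+1}" using Fs_two[OF assms(1) mF j] by (cases "m = j") auto
  qed
  have "(\<Sum>k\<in>Fs \<phi> t. \<bar>psi \<phi> k t\<bar>) \<le> (\<Sum>k\<in>{m,m+1}. \<bar>psi \<phi> k t\<bar>)"
    by (rule sum_mono2[OF _ sub]) auto
  also have "\<dots> \<le> 2*B + 2*B" using psi_bdd[where \<phi>=\<phi> and B=B and k=m and t=t, OF assms(2)] psi_bdd[where \<phi>=\<phi> and B=B and k="m+1" and t=t, OF assms(2)] by simp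
  finally show ?thesis by simp
qed


definition Tset :: "(real \<Rightarrow> real) \<Rightarrow> nat \<Rightarrow> real \<Rightarrow> real \<Rightarrow> (nat \<times> nat) set" where
  "Tset \<phi> c x y = {(k, k1). \<not> dsim c k k1} \<inter> (Fs \<phi> x \<times> Fs \<phi> y)"

lemma Mmult_fin: assumes "phi_ok \<phi>"
  shows "Mmult \<phi> c x y = (1 / sqrt (2 * pi)) * (\<Sum>(k, k1)\<in>Tset \<phi> c x y. psi \<phi> k1 y * psi \<phi> k x /
                       (x ^ 3 - y ^ 2 + (x - y) ^ 2))"
proof -
  have fin: "finite (Tset \<phi> c x y)" unfolding Tset_def using Fs_finite[OF assms] by auto
  have "infsum (\<lambda>(k, k1). psi \<phi> k1 y * psi \<phi> k x / (x ^ 3 - y ^ 2 + (x - y) ^ 2)) {(k, k1). \<not> dsim c k k1}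
      = infsum (\<lambda>(k, k1). psi \<phi> k1 y * psi \<phi> k x / (x ^ 3 - y ^ 2 + (x - y) ^ 2)) (Tset \<phi> c x y)"
    by (rule infsum_cong_neutral) (auto simp: Tset_def Fs_def)
  then show ?thesis unfolding Mmult_def using fin by simp
qed

lemma denom_bound:
  assumes "phi_ok \<phi>" "c \<ge> 6" "psi \<phi> k x \<noteq> 0" "psi \<phi> k1 y \<noteq> 0" "\<not> dsim c k k1"
  shows "(1 + x^2 + \<bar>y\<bar>) / 4 \<le> \<bar>x^2 + x - 2*y\<bar>"
proof -
  define p :: real where "p = 2^k"
  define p1 :: real where "p1 = 2^k1"
  define C :: real where "C = 2^c"
  have hx: "\<bar>x\<bar> \<le> 5/4 * p" "k = 0 \<or> p < 2*\<bar>x\<bar>" using psi_nz[OF assms(1,3)] p_def by auto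
  have hy: "\<bar>y\<bar> \<le> 5/4 * p1" "k1 = 0 \<or> p1 < 2*\<bar>y\<bar>" using psi_nz[OF assms(1,4)] p1_def by auto
  have p1: "p \<ge> 1" "p1 \<ge> 1" unfolding p_def p1_def by simp_all
  have "(2::real)^6 \<le> 2^c" using assms(2) by (rule power_increasing) simp
  then have C64: "C \<ge> 64" unfolding C_def by simp
  have nd: "\<not> (p * p / C \<le> p1 \<and> p1 \<le> C * (p * p))" using assms(5) unfolding dsim_def p_def p1_def C_def .
  have x2: "x^2 = \<bar>x\<bar>*\<bar>x\<bar>" by (simp add: power2_eq_square abs_mult[symmetric])
  have pp1: "1 \<le> p*p" using mult_mono[OF p1(1) p1(1)] p1 by simp
  show ?thesis
  proof (cases "p1 > C * (p * p)")
    case True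
    have "k1 \<noteq> 0"
    proof
      assume "k1 = 0" then have "p1 = 1" unfolding p1_def by simp
      moreover have "C * (p*p) \<ge> 64 * 1" using mult_mono[OF C64 pp1] C64 by simp
      ultimately show False using True by simp
    qed
    then have ylow: "p1 < 2*\<bar>y\<bar>" using hy by simp
    have pp: "p \<le> p*p" using mult_mono[OF order_refl p1(1), of p] p1 by simp
    have "64 * (p*p) \<le> C * (p*p)" using C64 by (intro mult_right_mono) auto
    then have Y: "\<bar>y\<bar> > 32 * (p*p)" using True ylow by linarith
    have "\<bar>x\<bar>*\<bar>x\<bar> \<le> (5/4*p) * (5/4*p)" using hx(1) by (intro mult_mono) auto
    then have X2: "x^2 \<le> 25/16 * (p*p)" unfolding x2 by simp
    have "\<bar>x^2 + x - 2*y\<bar> \<ge> 2*\<bar>y\<bar> - x^2 - \<bar>x\<bar>" using zero_le_power2[of x] by arith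
    then show ?thesis using Y X2 hx(1) pp pp1 by (simp add: field_simps)
  next
    case False
    then have B: "C * p1 < p * p" using nd p1 C64 by (simp add: field_simps)
    have Cp1: "64 * 1 \<le> C * p1" using mult_mono[OF C64 p1(2)] C64 by simp
    have "k \<noteq> 0"
    proof
      assume "k = 0" then have "p = 1" unfolding p_def by simp
      then show False using B Cp1 by simp
    qed
    then have xl: "p < 2*\<bar>x\<bar>" using hx by simp
    have p8: "p > 8"
    proof (rule ccontr)
      assume "\<not> p > 8"
      then have "p * p \<le> 8 * 8" using p1 by (intro mult_mono) auto
      then show False using B Cp1 by simp
    qed
    then have x4: "\<bar>x\<bar> > 4" using xl by simp
    have "p * p < (2*\<bar>x\<bar>) * (2*\<bar>x\<bar>)" using xl p1 by (intro mult_strict_mono) auto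
    then have pp: "p * p < 4 * x^2" unfolding x2 by simp
    have "C * \<bar>y\<bar> \<le> C * (5/4 * p1)" using hy(1) C64 by (intro mult_left_mono) auto
    moreover have "64 * \<bar>y\<bar> \<le> C * \<bar>y\<bar>" using C64 by (intro mult_right_mono) auto
    ultimately have Y: "64 * \<bar>y\<bar> \<le> 5 * x^2" using B pp by simp
    have "4 * \<bar>x\<bar> < \<bar>x\<bar> * \<bar>x\<bar>" using x4 by (intro mult_strict_right_mono) auto
    then have "4 * \<bar>x\<bar> < x^2" unfolding x2 .
    moreover have "\<bar>x^2 + x - 2*y\<bar> \<ge> x^2 - \<bar>x\<bar> - 2*\<bar>y\<bar>" using zero_le_power2[of x] by arith
    moreover have "4 * 4 < \<bar>x\<bar> * \<bar>x\<bar>" using x4 by (intro mult_strict_mono) auto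
    then have "16 < x^2" unfolding x2 by simp
    ultimately show ?thesis using Y by (simp add: field_simps)
  qed
qed


lemma Mmult_bound:
  assumes phi: "phi_ok \<phi>" and B: "\<And>x. \<bar>\<phi> x\<bar> \<le> B" and c: "c \<ge> 6"
  shows "\<bar>x\<bar> * \<bar>Mmult \<phi> c x y\<bar> \<le> 64 * B^2 / (1 + x^2 + \<bar>y\<bar>)"
proof (cases "x = 0")
  case True then show ?thesis by simp
next
  case False
  define D where "D = 1 + x^2 + \<bar>y\<bar>"
  have D: "D > 0" unfolding D_def by (simp add: add_pos_nonneg)
  define g where "g = (\<lambda>(k, k1). psi \<phi> k1 y * psi \<phi> k x / (x ^ 3 - y ^ 2 + (x - y) ^ 2))"
  define h where "h = (\<lambda>(k::nat, k1::nat). \<bar>psi \<phi> k1 y\<bar> * \<bar>psi \<phi> k x\<bar> * (4 / D))"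
  have fin: "finite (Tset \<phi> c x y)" unfolding Tset_def using Fs_finite[OF phi] by auto
  have each: "\<bar>x * g p\<bar> \<le> h p" if "p \<in> Tset \<phi> c x y" for p
  proof -
    obtain k k1 where p: "p = (k, k1)" by (cases p)
    have nz: "psi \<phi> k x \<noteq> 0" "psi \<phi> k1 y \<noteq> 0" "\<not> dsim c k k1"
      using that p by (auto simp: Tset_def Fs_def)
    have E: "D / 4 \<le> \<bar>x^2 + x - 2*y\<bar>" using denom_bound[OF phi c nz] D_def by simp
    then have Epos: "\<bar>x^2 + x - 2*y\<bar> > 0" using D by linarith
    have den: "x ^ 3 - y ^ 2 + (x - y) ^ 2 = x * (x^2 + x - 2*y)" by (simp add: algebra_simps power2_eq_square power3_eq_cube)
    have "\<bar>x * g p\<bar> = \<bar>psi \<phi> k1 y\<bar> * \<bar>psi \<phi> k x\<bar> / \<bar>x^2 + x - 2*y\<bar>"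
      using False by (simp add: g_def p den abs_mult abs_divide)
    also have "\<dots> \<le> \<bar>psi \<phi> k1 y\<bar> * \<bar>psi \<phi> k x\<bar> / (D / 4)"
      using E D Epos by (intro divide_left_mono) auto
    finally show ?thesis by (simp add: h_def p)
  qed
  have "\<bar>x\<bar> * \<bar>Mmult \<phi> c x y\<bar> = (1 / sqrt (2 * pi)) * \<bar>\<Sum>p\<in>Tset \<phi> c x y. x * g p\<bar>"
  proof -
    have M: "Mmult \<phi> c x y = (1 / sqrt (2 * pi)) * sum g (Tset \<phi> c x y)" unfolding Mmult_fin[OF phi] g_def ..
    have "(\<Sum>p\<in>Tset \<phi> c x y. x * g p) = x * sum g (Tset \<phi> c x y)" by (simp add: sum_distrib_left)
    then show ?thesis unfolding M by (simp add: abs_mult)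
  qed
  also have "\<dots> \<le> 1 * (\<Sum>p\<in>Tset \<phi> c x y. h p)"
  proof (rule mult_mono)
    have "2 * pi \<ge> 1" using pi_gt3 by simp
    then show "1 / sqrt (2 * pi) \<le> 1" by simp
    show "\<bar>\<Sum>p\<in>Tset \<phi> c x y. x * g p\<bar> \<le> (\<Sum>p\<in>Tset \<phi> c x y. h p)"
      by (rule order_trans[OF sum_abs sum_mono]) (rule each)
  qed (auto simp: h_def intro!: sum_nonneg)
  also have "\<dots> \<le> (\<Sum>p\<in>Fs \<phi> x \<times> Fs \<phi> y. h p)"
    unfolding mult_1 using Fs_finite[OF phi] D by (intro sum_mono2) (auto simp: Tset_def h_def)
  also have "\<dots> = (4 / D) * ((\<Sum>k\<in>Fs \<phi> x. \<bar>psi \<phi> k x\<bar>) * (\<Sum>k1\<in>Fs \<phi> y. \<bar>psi \<phi> k1 y\<bar>))"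
  proof -
    have "(\<Sum>p\<in>Fs \<phi> x \<times> Fs \<phi> y. h p) = (\<Sum>k\<in>Fs \<phi> x. \<Sum>k1\<in>Fs \<phi> y. (4/D) * (\<bar>psi \<phi> k x\<bar> * \<bar>psi \<phi> k1 y\<bar>))"
      by (simp add: sum.cartesian_product h_def mult_ac)
    also have "\<dots> = (4 / D) * ((\<Sum>k\<in>Fs \<phi> x. \<bar>psi \<phi> k x\<bar>) * (\<Sum>k1\<in>Fs \<phi> y. \<bar>psi \<phi> k1 y\<bar>))"
      unfolding sum_product by (simp add: sum_distrib_left)
    finally show ?thesis .
  qed
  also have "\<dots> \<le> (4 / D) * ((4*B) * (4*B))"
    using Fs_sum[OF phi B] D B[of 0] by (intro mult_left_mono mult_mono) (auto intro: sum_nonneg)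
  finally show ?thesis unfolding D_def by (simp add: power2_eq_square)
qed


lemma psi_meas: assumes "phi_ok \<phi>" shows "psi \<phi> k \<in> borel_measurable borel"
proof -
  have [measurable]: "\<phi> \<in> borel_measurable borel" by (rule borel_measurable_continuous_onI[OF phi_cont[OF assms]])
  show ?thesis unfolding psi_def by measurable
qed

lemma Mmult_meas: assumes phi: "phi_ok \<phi>"
  shows "(\<lambda>p. Mmult \<phi> c (fst p) (snd p)) \<in> borel_measurable borel"
proof (rule borel_measurable_LIMSEQ_real)
  define S where "S = {(k::nat, k1::nat). \<not> dsim c k k1}"
  define g where "g = (\<lambda>(q::nat\<times>nat) (x::real) (y::real). psi \<phi> (snd q) y * psi \<phi> (fst q) x / (x ^ 3 - y ^ 2 + (x - y) ^ 2))"
  define u where "u = (\<lambda>n (p::real\<times>real). (1 / sqrt (2 * pi)) * (\<Sum>q\<in>S \<inter> ({..n}\<times>{..n}). g q (fst p) (snd p)))"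
  have [measurable]: "psi \<phi> k \<in> borel_measurable borel" for k by (rule psi_meas[OF phi])
  show "u n \<in> borel_measurable borel" for n
    unfolding u_def g_def borel_prod[symmetric] by measurable
  show "(\<lambda>n. u n p) \<longlonglongrightarrow> Mmult \<phi> c (fst p) (snd p)" for p
  proof (rule tendsto_eventually)
    obtain x y where p: "p = (x, y)" by (cases p)
    define N where "N = nat \<lceil>2*\<bar>x\<bar>\<rceil> + nat \<lceil>2*\<bar>y\<bar>\<rceil>"
    have "u n p = Mmult \<phi> c (fst p) (snd p)" if "n \<ge> N" for n
    proof -
      have sub: "Tset \<phi> c x y \<subseteq> S \<inter> ({..n}\<times>{..n})"
        using Fs_sub[OF phi, of x] Fs_sub[OF phi, of y] that unfolding Tset_def S_def N_def by auto
      have "(\<Sum>q\<in>S \<inter> ({..n}\<times>{..n}). g q x y) = (\<Sum>q\<in>Tset \<phi> c x y. g q x y)"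
        by (rule sum.mono_neutral_right[OF _ sub]) (auto simp: g_def Tset_def S_def Fs_def Fs_finite[OF phi])
      then show ?thesis unfolding u_def p Mmult_fin[OF phi] g_def by (simp add: case_prod_unfold)
    qed
    then show "\<forall>\<^sub>F n in sequentially. u n p = Mmult \<phi> c (fst p) (snd p)"
      unfolding eventually_sequentially by blast
  qed
qed



lemma powr_sq_div: fixes M k a :: real assumes "M > 0" "k > 0" shows "(M^2/k) powr (-a) = k powr a * M powr (-2*a)"
proof -
  have "(M^2/k) powr (-a) = (M^2) powr (-a) / k powr (-a)" by (rule powr_divide)
  also have "(M^2) powr (-a) = M powr (-2*a)"
  proof -
    have "M^2 = M powr 2" using assms by simp
    then show ?thesis by (simp add: powr_powr)
  qed
  also have "1 / k powr (-a) = k powr a" by (simp add: powr_minus_divide)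
  ultimately show ?thesis by (simp add: powr_minus divide_inverse)
qed

lemma sq_powr: fixes M c :: real assumes "M > 0" shows "(M^2) powr c = M powr (2*c)"
proof -
  have "M^2 = M powr 2" using assms by simp
  then show ?thesis by (simp add: powr_powr)
qed

lemma powr_le1: "(X::real) \<ge> 1 \<Longrightarrow> e \<le> 0 \<Longrightarrow> X powr e \<le> (1::real)"
  using powr_mono[of e 0 X] by simp

lemma master:
  fixes a b q X W :: real
  assumes a: "a \<ge> 0" and b: "b \<ge> 0" and qa: "q \<ge> a" and bq: "b + q \<le> 2*a + 2"
    and X: "X \<ge> 1" and W: "W \<ge> 1"
  shows "X powr (2*b) * W powr (-2*a) * (max X W) powr (-2*a) / (X^2+W)^2 \<le> X powr (-2*q) + W powr (-2*q)"
proof (cases "W \<le> X")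
  case True
  have X0: "X > 0" "W > 0" using X W by auto
  have "X^4 \<le> (X^2+W)^2"
  proof -
    have "X^4 = (X^2)^2" by (simp flip: power_mult)
    also have "\<dots> \<le> (X^2+W)^2" using X0 by (intro power_mono) auto
    finally show ?thesis .
  qed
  then have "X powr (2*b) * W powr (-2*a) * X powr (-2*a) / (X^2+W)^2 \<le> X powr (2*b) * W powr (-2*a) * X powr (-2*a) / X^4"
    using X0 by (intro divide_left_mono) (auto intro!: mult_pos_pos add_pos_pos)
  also have "\<dots> = X powr (2*b - 2*a - 4) * W powr (-2*a)"
  proof -
    have "X powr (2*b - 2*a - 4) = X powr (2*b + (-2*a) - 4)" by simp
    also have "\<dots> = X powr (2*b) * X powr (-2*a) / X powr 4" by (simp only: powr_diff powr_add)
    finally show ?thesis using X0 by simp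
  qed
  also have "\<dots> = X powr (2*b - 2*a - 4) * (W powr (-2*q) * W powr (2*q-2*a))"
    by (simp add: powr_add[symmetric])
  also have "\<dots> \<le> X powr (2*b - 2*a - 4) * (W powr (-2*q) * X powr (2*q-2*a))"
    using X0 True qa by (intro mult_left_mono powr_mono2) auto
  also have "\<dots> = X powr (2*b - 4*a - 4 + 2*q) * W powr (-2*q)"
  proof -
    have "X powr (2*b - 2*a - 4) * X powr (2*q-2*a) = X powr (2*b - 4*a - 4 + 2*q)"
      by (simp add: powr_add[symmetric] algebra_simps)
    then show ?thesis by (simp add: mult_ac)
  qed
  also have "\<dots> \<le> 1 * W powr (-2*q)"
    using X bq by (intro mult_right_mono powr_le1) auto
  finally have L: "X powr (2*b) * W powr (-2*a) * X powr (-2*a) / (X^2+W)^2 \<le> 1 * W powr (-2*q)" .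
  have m: "max X W = X" using True by simp
  have "0 \<le> X powr (-2*q)" by simp
  then show ?thesis unfolding m using L by linarith
next
  case False
  have X0: "X > 0" "W > 0" using X W by auto
  have key: "X powr (2*b+2*q) \<le> W powr (4*a) * (X^2+W)^2"
  proof (cases "b + q \<le> 2")
    case True
    have "X powr (2*b+2*q) \<le> X powr 4" using X True by (intro powr_mono) auto
    also have "X powr 4 = (X^2)^2" using X0 by (simp flip: power_mult)
    also have "\<dots> \<le> (X^2+W)^2" using X0 by (intro power_mono) auto
    also have "\<dots> \<le> W powr (4*a) * (X^2+W)^2"
    proof -
      have "1 \<le> W powr (4*a)" using W a ge_one_powr_ge_zero[of W "4*a"] by simp
      then show ?thesis using mult_right_mono[of 1 "W powr (4*a)" "(X^2+W)^2"] by simp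
    qed
    finally show ?thesis .
  next
    case False
    have "X powr (2*b+2*q) = X powr (4 + (2*b+2*q-4))" by simp
    also have "\<dots> = X powr 4 * X powr (2*b+2*q-4)" by (simp only: powr_add)
    also have "\<dots> \<le> (X^2+W)^2 * W powr (2*b+2*q-4)"
    proof (intro mult_mono)
      have "X powr 4 = (X^2)^2" using X0 by (simp flip: power_mult)
      also have "\<dots> \<le> (X^2+W)^2" using X0 by (intro power_mono) auto
      finally show "X powr 4 \<le> (X^2+W)^2" .
      show "X powr (2*b+2*q-4) \<le> W powr (2*b+2*q-4)" using X0 \<open>\<not> W \<le> X\<close> False by (intro powr_mono2) auto
    qed auto
    also have "\<dots> \<le> (X^2+W)^2 * W powr (4*a)" using W bq by (intro mult_left_mono powr_mono) auto
    finally show ?thesis by (simp add: mult.commute)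
  qed
  have "X powr (2*b) * W powr (-2*a) * W powr (-2*a) / (X^2+W)^2
      = X powr (-2*q) * (X powr (2*b+2*q) / (W powr (4*a) * (X^2+W)^2))"
  proof -
    have e1: "X powr (2*b+2*q) = X powr (2*b) * X powr (2*q)" by (simp only: powr_add)
    have e2: "W powr (-2*a) * W powr (-2*a) = 1 / W powr (4*a)"
    proof -
      have "W powr (-2*a) * W powr (-2*a) = W powr (-(4*a))" by (simp add: powr_add[symmetric])
      then show ?thesis by (simp add: powr_minus divide_inverse)
    qed
    have e3: "X powr (-2*q) = 1 / X powr (2*q)" by (simp add: powr_minus divide_inverse)
    have p: "X powr (2*q) > 0" "W powr (4*a) > 0" using X0 by auto
    show ?thesis unfolding e1 e3 mult.assoc[of "X powr (2*b)"] e2 using p by (simp add: field_simps)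
  qed
  also have "\<dots> \<le> X powr (-2*q) * 1"
    using key X0 by (intro mult_left_mono) (auto simp: divide_le_eq_1)
  finally have L: "X powr (2*b) * W powr (-2*a) * W powr (-2*a) / (X^2+W)^2 \<le> X powr (-2*q) * 1" .
  have m: "max X W = W" using False by simp
  have "0 \<le> W powr (-2*q)" by simp
  then show ?thesis unfolding m using L by linarith
qed


lemma conv:
  fixes a b q x u v d :: real
  assumes a: "a \<ge> 0" and b: "b \<ge> 0" and qa: "q \<ge> a" and bq: "b + q \<le> 2*a + 2"
    and uv: "\<bar>u\<bar> \<le> \<bar>v\<bar>" and xuv: "\<bar>x\<bar> \<le> \<bar>u\<bar> + \<bar>v\<bar>" and d: "d \<ge> \<bar>u\<bar>"
  shows "(1+x^2) powr b * (1+u^2) powr (-a) * (1+v^2) powr (-a) / (1+x^2+d)^2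
         \<le> 9 * 16 powr a * ((1+x^2) powr (-q) + (1+u^2) powr (-q))"
proof -
  define X where "X = 1 + \<bar>x\<bar>"
  define W where "W = 1 + \<bar>u\<bar>"
  define V where "V = 1 + \<bar>v\<bar>"
  define M where "M = max X W"
  have X1: "X \<ge> 1" "W \<ge> 1" "V \<ge> 1" "M \<ge> 1" unfolding X_def W_def V_def M_def by auto
  have sq: "\<And>t::real. (1 + \<bar>t\<bar>)^2 \<le> 2 * (1 + t^2)" "\<And>t::real. 1 + t^2 \<le> (1 + \<bar>t\<bar>)^2"
  proof -
    fix t :: real
    have "0 \<le> (\<bar>t\<bar> - 1)^2" by simp
    moreover have "\<bar>t\<bar>^2 = t^2" by simp
    ultimately show "(1 + \<bar>t\<bar>)^2 \<le> 2 * (1 + t^2)" by (simp add: power2_eq_square algebra_simps)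
  next
    fix t :: real
    have "\<bar>t\<bar>^2 = t^2" by simp
    then show "1 + t^2 \<le> (1 + \<bar>t\<bar>)^2" by (simp add: power2_eq_square algebra_simps)
  qed
  have pos: "0 < 1 + x^2" "0 < 1 + u^2" "0 < 1 + v^2" by (auto intro: add_pos_nonneg)
  have f1: "(1+x^2) powr b \<le> X powr (2*b)"
  proof -
    have "(1+x^2) powr b \<le> (X^2) powr b" using sq(2)[of x] b pos unfolding X_def by (intro powr_mono2) auto
    also have "X^2 = X powr 2" using X1 by simp
    finally show ?thesis by (simp add: powr_powr mult.commute)
  qed
  have f2: "(1+u^2) powr (-a) \<le> 2 powr a * W powr (-2*a)"
  proof -
    have "(1+u^2) powr (-a) \<le> (W^2/2) powr (-a)"
      using sq(1)[of u] a X1 unfolding W_def by (intro powr_mono2') auto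
    also have "\<dots> = 2 powr a * W powr (-2*a)" using X1 by (intro powr_sq_div) auto
    finally show ?thesis .
  qed
  have f3: "(1+v^2) powr (-a) \<le> 8 powr a * M powr (-2*a)"
  proof -
    have "M \<le> 2 * V" using uv xuv unfolding M_def X_def W_def V_def by auto
    then have "M^2 \<le> (2*V)^2" using X1 by (intro power_mono) auto
    also have "\<dots> \<le> 8 * (1+v^2)"
    proof -
      have "(2*V)^2 = 4*V^2" by (simp add: power_mult_distrib)
      moreover have "V^2 \<le> 2 * (1 + v^2)" using sq(1)[of v] unfolding V_def .
      ultimately show ?thesis by linarith
    qed
    finally have "M^2/8 \<le> 1 + v^2" by simp
    then have "(1+v^2) powr (-a) \<le> (M^2/8) powr (-a)"
      using a X1 by (intro powr_mono2') auto
    also have "\<dots> = 8 powr a * M powr (-2*a)" using X1 by (intro powr_sq_div) auto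
    finally show ?thesis .
  qed
  have f4: "1 / (1+x^2+d)^2 \<le> 9 / (X^2+W)^2"
  proof -
    have "X^2 + W \<le> 2 * (1+x^2) + (1 + d)" using sq(1)[of x] d unfolding X_def W_def by (intro add_mono) auto
    also have "\<dots> \<le> 3 * (1+x^2+d)" using d abs_ge_zero[of u] zero_le_power2[of x] by (simp add: algebra_simps)
    finally have "X^2 + W \<le> 3 * (1+x^2+d)" .
    then have h: "(X^2+W)^2 \<le> (3 * (1+x^2+d))^2" using X1 by (intro power_mono) auto
    have e: "(3 * (1+x^2+d))^2 = 9 * (1+x^2+d)^2" by (subst power_mult_distrib) simp
    have "(X^2+W)^2 \<le> 9 * (1+x^2+d)^2" using h unfolding e .
    moreover have "0 < (X^2+W)^2" using X1 by (intro zero_less_power) (auto intro: add_pos_pos)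
    moreover have "0 < 1+x^2+d" using d pos by linarith
    ultimately show ?thesis by (simp add: field_simps)
  qed
  have f5: "X powr (-2*q) \<le> (1+x^2) powr (-q)" "W powr (-2*q) \<le> (1+u^2) powr (-q)"
  proof -
    have "X powr (-2*q) = (X^2) powr (-q)" "W powr (-2*q) = (W^2) powr (-q)" using X1 sq_powr[of X "-q"] sq_powr[of W "-q"] by simp_all
    moreover have "(X^2) powr (-q) \<le> (1+x^2) powr (-q)" using sq(2)[of x] pos a qa unfolding X_def by (intro powr_mono2') auto
    moreover have "(W^2) powr (-q) \<le> (1+u^2) powr (-q)" using sq(2)[of u] pos a qa unfolding W_def by (intro powr_mono2') auto
    ultimately show "X powr (-2*q) \<le> (1+x^2) powr (-q)" "W powr (-2*q) \<le> (1+u^2) powr (-q)" by simp_all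
  qed
  have mst: "X powr (2*b) * W powr (-2*a) * M powr (-2*a) / (X^2+W)^2 \<le> X powr (-2*q) + W powr (-2*q)"
    unfolding M_def by (rule master[OF a b qa bq X1(1,2)])
  have "(1+x^2) powr b * (1+u^2) powr (-a) * (1+v^2) powr (-a) / (1+x^2+d)^2
      = (1+x^2) powr b * (1+u^2) powr (-a) * (1+v^2) powr (-a) * (1 / (1+x^2+d)^2)" by simp
  also have "\<dots> \<le> X powr (2*b) * (2 powr a * W powr (-2*a)) * (8 powr a * M powr (-2*a)) * (9 / (X^2+W)^2)"
    by (intro mult_mono f1 f2 f3 f4) auto
  also have "\<dots> = 9 * (2 powr a * 8 powr a) * (X powr (2*b) * W powr (-2*a) * M powr (-2*a) / (X^2+W)^2)"
    by (simp add: field_simps)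
  also have "2 powr a * 8 powr a = 16 powr a" by (simp add: powr_mult[symmetric])
  also have "9 * 16 powr a * (X powr (2*b) * W powr (-2*a) * M powr (-2*a) / (X^2+W)^2) \<le> 9 * 16 powr a * (X powr (-2*q) + W powr (-2*q))"
    using mst by (intro mult_left_mono) auto
  also have "\<dots> \<le> 9 * 16 powr a * ((1+x^2) powr (-q) + (1+u^2) powr (-q))"
    using f5 by (intro mult_left_mono add_mono) auto
  finally show ?thesis .
qed



lemma Iq_fin: fixes q :: real assumes q: "q > 1/2"
  shows "(\<integral>\<^sup>+x. ennreal ((1+x^2) powr (-q)) \<partial>lborel) < \<infinity>"
proof -
  define e where "e = -2*q"
  have e: "e < -1" using q e_def by simp
  define g where "g = (\<lambda>x::real. ennreal (x powr e) * indicator {1..} x)"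
  have gm[measurable]: "g \<in> borel_measurable borel" unfolding g_def by measurable
  have Ig: "(\<integral>\<^sup>+x. g x \<partial>lborel) = ennreal (-(1 powr (e+1)) / (e+1))"
    unfolding g_def by (rule nn_integral_has_integral_lebesgue'[OF _ has_integral_powr_to_inf[OF e]]) auto
  have Ig2: "(\<integral>\<^sup>+x. g (-x) \<partial>lborel) = (\<integral>\<^sup>+x. g x \<partial>lborel)"
    using nn_integral_real_affine[OF gm, of "-1" 0] by simp
  have pw: "ennreal ((1+x^2) powr (-q)) \<le> indicator {-1..1} x + g x + g (-x)" for x :: real
  proof -
    have q0: "-q \<le> 0" using q by simp
    consider "\<bar>x\<bar> \<le> 1" | "x > 1" | "x < -1" by linarith
    then show ?thesis
    proof cases
      case 1
      have "(1+x^2) powr (-q) \<le> 1" using q0 by (intro powr_le1) auto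
      then have "ennreal ((1+x^2) powr (-q)) \<le> indicator {-1..1} x" using 1 by (auto simp: indicator_def)
      then show ?thesis by (rule order_trans) (simp add: add.assoc)
    next
      case 2
      have "(1+x^2) powr (-q) \<le> (x^2) powr (-q)" using 2 q0 by (intro powr_mono2') auto
      also have "\<dots> = x powr e" using 2 sq_powr[of x "-q"] e_def by simp
      finally have "ennreal ((1+x^2) powr (-q)) \<le> g x" using 2 unfolding g_def by (auto intro: ennreal_leI)
      then show ?thesis by (rule order_trans) (simp add: add.commute add.left_commute)
    next
      case 3
      have "(1+x^2) powr (-q) \<le> ((-x)^2) powr (-q)" using 3 q0 by (intro powr_mono2') auto
      also have "\<dots> = (-x) powr e" using 3 sq_powr[of "-x" "-q"] e_def by simp
      finally have "ennreal ((1+x^2) powr (-q)) \<le> g (-x)" using 3 unfolding g_def by (auto intro: ennreal_leI)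
      then show ?thesis by (rule order_trans) simp
    qed
  qed
  have "(\<integral>\<^sup>+x. ennreal ((1+x^2) powr (-q)) \<partial>lborel) \<le> (\<integral>\<^sup>+x. indicator {-1..1} x + g x + g (-x) \<partial>lborel)"
    by (intro nn_integral_mono pw)
  also have "\<dots> = 2 + (\<integral>\<^sup>+x. g x \<partial>lborel) + (\<integral>\<^sup>+x. g (-x) \<partial>lborel)"
  proof -
    have m1: "(\<lambda>x. g (-x)) \<in> borel_measurable lborel" by measurable
    have m2: "(\<lambda>x. indicator {-1..1::real} x + g x) \<in> borel_measurable lborel" by measurable
    have m3: "(\<lambda>x. indicator {-1..1::real} x :: ennreal) \<in> borel_measurable lborel" by measurable
    have m4: "g \<in> borel_measurable lborel" by measurable
    show ?thesis using nn_integral_add[OF m2 m1] nn_integral_add[OF m3 m4] by simp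
  qed
  also have "\<dots> = 2 + ennreal (-(1 powr (e+1)) / (e+1)) + ennreal (-(1 powr (e+1)) / (e+1))"
    using Ig Ig2 by simp
  also have "\<dots> < \<infinity>" by (simp add: less_top[symmetric])
  finally show ?thesis .
qed



definition L2 :: "real \<Rightarrow> real \<Rightarrow> real \<Rightarrow> real \<Rightarrow> real" where
  "L2 a b x y = (1+x^2) powr b * (1+y^2) powr (-a) * (1+(y-x)^2) powr (-a) / (1+x^2+\<bar>y\<bar>)^2"

lemma L2_measurable[measurable (raw)]:
  fixes g h :: "'a \<Rightarrow> real"
  assumes [measurable]: "g \<in> borel_measurable M" "h \<in> borel_measurable M"
  shows "(\<lambda>t. L2 a b (g t) (h t)) \<in> borel_measurable M"
  unfolding L2_def by measurable

definition W1 :: "real \<Rightarrow> real \<Rightarrow> real \<Rightarrow> real \<Rightarrow> real" where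
  "W1 a b x y = (if \<bar>y\<bar> \<le> \<bar>y-x\<bar> then sqrt (L2 a b x y) else 0)"
definition W2 :: "real \<Rightarrow> real \<Rightarrow> real \<Rightarrow> real \<Rightarrow> real" where
  "W2 a b x y = (if \<bar>y\<bar> \<le> \<bar>y-x\<bar> then 0 else sqrt (L2 a b x y))"

lemma W1_measurable[measurable (raw)]:
  fixes g h :: "'a \<Rightarrow> real"
  assumes [measurable]: "g \<in> borel_measurable M" "h \<in> borel_measurable M"
  shows "(\<lambda>t. W1 a b (g t) (h t)) \<in> borel_measurable M"
  unfolding W1_def by measurable

lemma W2_measurable[measurable (raw)]:
  fixes g h :: "'a \<Rightarrow> real"
  assumes [measurable]: "g \<in> borel_measurable M" "h \<in> borel_measurable M"
  shows "(\<lambda>t. W2 a b (g t) (h t)) \<in> borel_measurable M"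
  unfolding W2_def by measurable

lemma L2_nonneg: "L2 a b x y \<ge> 0"
  unfolding L2_def by simp

lemma sq_plus_ennreal: fixes P Q :: ennreal shows "(P + Q)^2 \<le> 2 * P^2 + 2 * Q^2"
proof -
  have "(P + Q)^2 = P^2 + Q^2 + 2 * P * Q" by (simp add: power2_sum)
  also have "\<dots> \<le> P^2 + Q^2 + (P^2 + Q^2)" using sum_of_squares_ge_ennreal[of P Q] by (intro add_left_mono)
  also have "\<dots> = 2 * P^2 + 2 * Q^2" by (simp add: algebra_simps mult_2)
  finally show ?thesis .
qed

lemma core:
  fixes a b q :: real and f :: "real \<Rightarrow> real"
  assumes a: "a \<ge> 0" and b: "b \<ge> 0" and qa: "q \<ge> a" and bq: "b + q \<le> 2*a+2"
    and fm[measurable]: "f \<in> borel_measurable borel" and f0: "\<And>t. f t \<ge> 0"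
  shows "(\<integral>\<^sup>+x. (\<integral>\<^sup>+y. ennreal (sqrt (L2 a b x y) * f y * f (y - x)) \<partial>lborel)^2 \<partial>lborel)
     \<le> 8 * ennreal (9 * 16 powr a) * (\<integral>\<^sup>+x. ennreal ((1+x^2) powr (-q)) \<partial>lborel) * (\<integral>\<^sup>+t. ennreal ((f t)^2) \<partial>lborel)^2"
proof -
  define K where "K = 9 * 16 powr a"
  define I where "I = (\<integral>\<^sup>+x. ennreal ((1+x^2) powr (-q)) \<partial>lborel)"
  define F where "F = (\<integral>\<^sup>+t. ennreal ((f t)^2) \<partial>lborel)"
  define g where "g x = (1+x^2) powr (-q)" for x :: real
  have gm[measurable]: "g \<in> borel_measurable borel" unfolding g_def by measurable
  have g0: "\<And>x. g x \<ge> 0" unfolding g_def by simp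
  have flm[measurable]: "f \<in> borel_measurable lborel" by simp
  have glm[measurable]: "g \<in> borel_measurable lborel" by simp
  have K0: "K \<ge> 0" unfolding K_def by simp
  have w10: "W1 a b x y \<ge> 0" "W2 a b x y \<ge> 0" for x y unfolding W1_def W2_def using L2_nonneg by auto
  have B1: "(W1 a b x (x+z))^2 \<le> K * (g x + g (x+z))" for x z
  proof (cases "\<bar>x+z\<bar> \<le> \<bar>z\<bar>")
    case True
    have "(W1 a b x (x+z))^2 = L2 a b x (x+z)" using True L2_nonneg by (simp add: W1_def)
    also have "\<dots> = (1+x^2) powr b * (1+(x+z)^2) powr (-a) * (1+z^2) powr (-a) / (1+x^2+\<bar>x+z\<bar>)^2"
      by (simp add: L2_def)
    also have "\<dots> \<le> K * (g x + g (x+z))" unfolding K_def g_def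
      by (rule conv[OF a b qa bq True]) auto
    finally show ?thesis .
  next
    case False
    then show ?thesis using K0 by (simp add: W1_def g_def)
  qed
  have B2: "(W2 a b x y)^2 \<le> K * (g x + g (y-x))" for x y
  proof (cases "\<bar>y\<bar> \<le> \<bar>y-x\<bar>")
    case False
    have "(W2 a b x y)^2 = L2 a b x y" using False L2_nonneg by (simp add: W2_def)
    also have "\<dots> = (1+x^2) powr b * (1+(y-x)^2) powr (-a) * (1+y^2) powr (-a) / (1+x^2+\<bar>y\<bar>)^2"
      by (simp add: L2_def mult_ac)
    also have "\<dots> \<le> K * (g x + g (y-x))" unfolding K_def g_def
      by (rule conv[OF a b qa bq]) (use False in auto)
    finally show ?thesis .
  next
    case True
    then show ?thesis using K0 by (simp add: W2_def g_def)
  qed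
  have Ig: "(\<integral>\<^sup>+x. ennreal (g x) \<partial>lborel) = I" unfolding I_def g_def ..
  have J1: "(\<integral>\<^sup>+x. ennreal ((W1 a b x (x+z))^2) \<partial>lborel) \<le> ennreal K * (2 * I)" for z
  proof -
    have "(\<integral>\<^sup>+x. ennreal ((W1 a b x (x+z))^2) \<partial>lborel) \<le> (\<integral>\<^sup>+x. ennreal K * (ennreal (g x) + ennreal (g (x+z))) \<partial>lborel)"
    proof (intro nn_integral_mono)
      fix x
      have "ennreal K * (ennreal (g x) + ennreal (g (x+z))) = ennreal (K * (g x + g (x+z)))"
        using K0 g0 by (simp add: ennreal_mult ennreal_plus)
      then show "ennreal ((W1 a b x (x+z))^2) \<le> ennreal K * (ennreal (g x) + ennreal (g (x+z)))"
        using B1[of x z] by (simp add: ennreal_leI)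
    qed
    also have "\<dots> = ennreal K * ((\<integral>\<^sup>+x. ennreal (g x) \<partial>lborel) + (\<integral>\<^sup>+x. ennreal (g (x+z)) \<partial>lborel))"
      by (simp add: nn_integral_cmult nn_integral_add)
    also have "(\<integral>\<^sup>+x. ennreal (g (x+z)) \<partial>lborel) = (\<integral>\<^sup>+x. ennreal (g x) \<partial>lborel)"
      using nn_integral_real_affine[of "\<lambda>x. ennreal (g x)" 1 z] by (simp add: add.commute)
    finally show ?thesis using Ig by (simp add: mult_2)
  qed
  have J2: "(\<integral>\<^sup>+x. ennreal ((W2 a b x y)^2) \<partial>lborel) \<le> ennreal K * (2 * I)" for y
  proof -
    have "(\<integral>\<^sup>+x. ennreal ((W2 a b x y)^2) \<partial>lborel) \<le> (\<integral>\<^sup>+x. ennreal K * (ennreal (g x) + ennreal (g (y-x))) \<partial>lborel)"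
    proof (intro nn_integral_mono)
      fix x
      have "ennreal K * (ennreal (g x) + ennreal (g (y-x))) = ennreal (K * (g x + g (y-x)))"
        using K0 g0 by (simp add: ennreal_mult ennreal_plus)
      then show "ennreal ((W2 a b x y)^2) \<le> ennreal K * (ennreal (g x) + ennreal (g (y-x)))"
        using B2[of x y] by (simp add: ennreal_leI)
    qed
    also have "\<dots> = ennreal K * ((\<integral>\<^sup>+x. ennreal (g x) \<partial>lborel) + (\<integral>\<^sup>+x. ennreal (g (y-x)) \<partial>lborel))"
      by (simp add: nn_integral_cmult nn_integral_add)
    also have "(\<integral>\<^sup>+x. ennreal (g (y-x)) \<partial>lborel) = (\<integral>\<^sup>+x. ennreal (g x) \<partial>lborel)"
      using nn_integral_real_affine[of "\<lambda>x. ennreal (g x)" "-1" y] by simp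
    finally show ?thesis using Ig by (simp add: mult_2)
  qed
  define P where "P x = (\<integral>\<^sup>+y. ennreal (f y) * ennreal (W1 a b x y * f (y-x)) \<partial>lborel)" for x
  define Q where "Q x = (\<integral>\<^sup>+y. ennreal (W2 a b x y * f y) * ennreal (f (y-x)) \<partial>lborel)" for x
  define A1 where "A1 x = (\<integral>\<^sup>+y. ennreal ((W1 a b x y * f (y-x))^2) \<partial>lborel)" for x
  define A2 where "A2 x = (\<integral>\<^sup>+y. ennreal ((W2 a b x y * f y)^2) \<partial>lborel)" for x
  have split: "(\<integral>\<^sup>+y. ennreal (sqrt (L2 a b x y) * f y * f (y - x)) \<partial>lborel) = P x + Q x" for x
  proof -
    have "(\<integral>\<^sup>+y. ennreal (sqrt (L2 a b x y) * f y * f (y - x)) \<partial>lborel)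
        = (\<integral>\<^sup>+y. ennreal (f y) * ennreal (W1 a b x y * f (y-x)) + ennreal (W2 a b x y * f y) * ennreal (f (y-x)) \<partial>lborel)"
    proof (intro nn_integral_cong)
      fix y
      show "ennreal (sqrt (L2 a b x y) * f y * f (y - x)) = ennreal (f y) * ennreal (W1 a b x y * f (y-x)) + ennreal (W2 a b x y * f y) * ennreal (f (y-x))"
        using f0[of y] f0[of "y-x"] L2_nonneg[of a b x y]
        by (cases "\<bar>y\<bar> \<le> \<bar>y-x\<bar>") (simp_all add: W1_def W2_def ennreal_mult[symmetric] mult_ac)
    qed
    also have "\<dots> = P x + Q x" unfolding P_def Q_def by (rule nn_integral_add) measurable
    finally show ?thesis .
  qed
  have CS1: "(P x)^2 \<le> F * A1 x" for x
  proof -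
    have "(P x)^2 \<le> (\<integral>\<^sup>+y. ennreal (f y) ^ 2 \<partial>lborel) * (\<integral>\<^sup>+y. ennreal (W1 a b x y * f (y-x)) ^ 2 \<partial>lborel)"
      unfolding P_def by (rule Cauchy_Schwarz_nn_integral) measurable
    also have "\<dots> = F * A1 x"
    proof -
      have e1: "\<And>y. (ennreal (f y))^2 = ennreal ((f y)^2)" using f0 by (simp add: ennreal_power)
      have e2: "\<And>y. (ennreal (W1 a b x y * f (y-x)))^2 = ennreal ((W1 a b x y * f (y-x))^2)"
        using f0 w10 by (simp add: ennreal_power)
      show ?thesis unfolding F_def A1_def e1 e2 ..
    qed
    finally show ?thesis .
  qed
  have Fshift: "(\<integral>\<^sup>+y. ennreal ((f (y-x))^2) \<partial>lborel) = F" for x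
  proof -
    have hm: "(\<lambda>t. ennreal ((f t)^2)) \<in> borel_measurable borel" by measurable
    show ?thesis using nn_integral_real_affine[OF hm, of 1 "-x"] unfolding F_def by simp
  qed
  have CS2: "(Q x)^2 \<le> A2 x * F" for x
  proof -
    have "(Q x)^2 \<le> (\<integral>\<^sup>+y. ennreal (W2 a b x y * f y) ^ 2 \<partial>lborel) * (\<integral>\<^sup>+y. ennreal (f (y-x)) ^ 2 \<partial>lborel)"
      unfolding Q_def by (rule Cauchy_Schwarz_nn_integral) measurable
    also have "\<dots> = A2 x * F"
    proof -
      have e1: "\<And>y. (ennreal (f (y-x)))^2 = ennreal ((f (y-x))^2)" using f0 by (simp add: ennreal_power)
      have e2: "\<And>y. (ennreal (W2 a b x y * f y))^2 = ennreal ((W2 a b x y * f y)^2)"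
        using f0 w10 by (simp add: ennreal_power)
      show ?thesis unfolding A2_def Fshift[of x, symmetric] e1 e2 ..
    qed
    finally show ?thesis .
  qed
  have A1m[measurable]: "A1 \<in> borel_measurable lborel" unfolding A1_def by measurable
  have A2m[measurable]: "A2 \<in> borel_measurable lborel" unfolding A2_def by measurable
  have intA1: "(\<integral>\<^sup>+x. A1 x \<partial>lborel) \<le> F * (ennreal K * (2 * I))"
  proof -
    have "(\<integral>\<^sup>+x. A1 x \<partial>lborel) = (\<integral>\<^sup>+x. (\<integral>\<^sup>+z. ennreal ((W1 a b x (x+z) * f z)^2) \<partial>lborel) \<partial>lborel)"
    proof (intro nn_integral_cong)
      fix x
      have hm: "(\<lambda>y. ennreal ((W1 a b x y * f (y - x))^2)) \<in> borel_measurable borel" by measurable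
      have "A1 x = (\<integral>\<^sup>+z. ennreal ((W1 a b x (x + 1*z) * f ((x + 1*z)-x))^2) \<partial>lborel)"
        using nn_integral_real_affine[OF hm, of 1 x] unfolding A1_def by simp
      then show "A1 x = (\<integral>\<^sup>+z. ennreal ((W1 a b x (x+z) * f z)^2) \<partial>lborel)" by simp
    qed
    also have "\<dots> = (\<integral>\<^sup>+z. (\<integral>\<^sup>+x. ennreal ((W1 a b x (x+z) * f z)^2) \<partial>lborel) \<partial>lborel)"
      by (rule lborel_pair.Fubini'[symmetric]) measurable
    also have "\<dots> = (\<integral>\<^sup>+z. ennreal ((f z)^2) * (\<integral>\<^sup>+x. ennreal ((W1 a b x (x+z))^2) \<partial>lborel) \<partial>lborel)"
    proof (intro nn_integral_cong)
      fix z
      have "(\<integral>\<^sup>+x. ennreal ((W1 a b x (x+z) * f z)^2) \<partial>lborel) = (\<integral>\<^sup>+x. ennreal ((f z)^2) * ennreal ((W1 a b x (x+z))^2) \<partial>lborel)"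
        by (intro nn_integral_cong) (simp add: ennreal_mult[symmetric] power_mult_distrib mult_ac)
      also have "\<dots> = ennreal ((f z)^2) * (\<integral>\<^sup>+x. ennreal ((W1 a b x (x+z))^2) \<partial>lborel)"
        by (rule nn_integral_cmult) measurable
      finally show "(\<integral>\<^sup>+x. ennreal ((W1 a b x (x+z) * f z)^2) \<partial>lborel) = ennreal ((f z)^2) * (\<integral>\<^sup>+x. ennreal ((W1 a b x (x+z))^2) \<partial>lborel)" .
    qed
    also have "\<dots> \<le> (\<integral>\<^sup>+z. ennreal ((f z)^2) * (ennreal K * (2 * I)) \<partial>lborel)"
      by (intro nn_integral_mono mult_left_mono J1) auto
    also have "\<dots> = F * (ennreal K * (2 * I))" unfolding F_def by (rule nn_integral_multc) measurable
    finally show ?thesis .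
  qed
  have intA2: "(\<integral>\<^sup>+x. A2 x \<partial>lborel) \<le> F * (ennreal K * (2 * I))"
  proof -
    have "(\<integral>\<^sup>+x. A2 x \<partial>lborel) = (\<integral>\<^sup>+y. (\<integral>\<^sup>+x. ennreal ((W2 a b x y * f y)^2) \<partial>lborel) \<partial>lborel)"
      unfolding A2_def by (rule lborel_pair.Fubini'[symmetric]) measurable
    also have "\<dots> = (\<integral>\<^sup>+y. ennreal ((f y)^2) * (\<integral>\<^sup>+x. ennreal ((W2 a b x y)^2) \<partial>lborel) \<partial>lborel)"
    proof (intro nn_integral_cong)
      fix y
      have "(\<integral>\<^sup>+x. ennreal ((W2 a b x y * f y)^2) \<partial>lborel) = (\<integral>\<^sup>+x. ennreal ((f y)^2) * ennreal ((W2 a b x y)^2) \<partial>lborel)"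
        by (intro nn_integral_cong) (simp add: ennreal_mult[symmetric] power_mult_distrib mult_ac)
      also have "\<dots> = ennreal ((f y)^2) * (\<integral>\<^sup>+x. ennreal ((W2 a b x y)^2) \<partial>lborel)"
        by (rule nn_integral_cmult) measurable
      finally show "(\<integral>\<^sup>+x. ennreal ((W2 a b x y * f y)^2) \<partial>lborel) = ennreal ((f y)^2) * (\<integral>\<^sup>+x. ennreal ((W2 a b x y)^2) \<partial>lborel)" .
    qed
    also have "\<dots> \<le> (\<integral>\<^sup>+y. ennreal ((f y)^2) * (ennreal K * (2 * I)) \<partial>lborel)"
      by (intro nn_integral_mono mult_left_mono J2) auto
    also have "\<dots> = F * (ennreal K * (2 * I))" unfolding F_def by (rule nn_integral_multc) measurable
    finally show ?thesis .
  qed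
  have "(\<integral>\<^sup>+x. (\<integral>\<^sup>+y. ennreal (sqrt (L2 a b x y) * f y * f (y - x)) \<partial>lborel)^2 \<partial>lborel)
      \<le> (\<integral>\<^sup>+x. 2 * F * A1 x + 2 * F * A2 x \<partial>lborel)"
  proof (intro nn_integral_mono)
    fix x
    have "(P x + Q x)^2 \<le> 2 * (P x)^2 + 2 * (Q x)^2" by (rule sq_plus_ennreal)
    also have "\<dots> \<le> 2 * (F * A1 x) + 2 * (A2 x * F)" using CS1 CS2 by (intro add_mono mult_left_mono) auto
    finally show "(\<integral>\<^sup>+y. ennreal (sqrt (L2 a b x y) * f y * f (y - x)) \<partial>lborel)^2 \<le> 2 * F * A1 x + 2 * F * A2 x"
      unfolding split by (simp add: mult_ac)
  qed
  also have "\<dots> = 2 * F * (\<integral>\<^sup>+x. A1 x \<partial>lborel) + 2 * F * (\<integral>\<^sup>+x. A2 x \<partial>lborel)"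
    by (simp add: nn_integral_add nn_integral_cmult)
  also have "\<dots> \<le> 2 * F * (F * (ennreal K * (2 * I))) + 2 * F * (F * (ennreal K * (2 * I)))"
    using intA1 intA2 by (intro add_mono mult_left_mono) auto
  also have "\<dots> = 8 * ennreal K * I * F^2"
  proof -
    have h: "\<And>Z::ennreal. Z + Z = 2 * Z" by (simp add: mult_2)
    show ?thesis unfolding h by (simp add: power2_eq_square mult_ac)
  qed
  finally show ?thesis unfolding K_def I_def F_def .
qed



lemma cnj_measurable[measurable (raw)]:
  fixes f :: "'a \<Rightarrow> complex"
  assumes "f \<in> borel_measurable M" shows "(\<lambda>x. cnj (f x)) \<in> borel_measurable M"
proof -
  have "cnj \<in> borel_measurable borel"
    by (intro borel_measurable_continuous_onI continuous_on_cnj continuous_on_id)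
  from measurable_compose[OF assms this] show ?thesis .
qed

lemma Mmult_measurable[measurable (raw)]:
  fixes g h :: "'a \<Rightarrow> real"
  assumes phi: "phi_ok \<phi>" and gm: "g \<in> borel_measurable M" and hm: "h \<in> borel_measurable M"
  shows "(\<lambda>t. Mmult \<phi> c (g t) (h t)) \<in> borel_measurable M"
proof -
  have "(\<lambda>t. (g t, h t)) \<in> measurable M (borel \<Otimes>\<^sub>M borel)" using gm hm by (intro measurable_Pair)
  then have "(\<lambda>t. (g t, h t)) \<in> measurable M borel" by (simp add: borel_prod)
  from measurable_compose[OF this Mmult_meas[OF phi, of c]] show ?thesis by simp
qed

lemma sqrtL2:
  fixes a b x y :: real
  shows "sqrt (L2 a b x y) * sqrt ((1+y^2) powr a) * sqrt ((1+(y-x)^2) powr a) = sqrt ((1+x^2) powr b) / (1+x^2+\<bar>y\<bar>)"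
proof -
  have y0: "1 + y^2 \<noteq> 0" "1 + (y-x)^2 \<noteq> 0" using zero_le_power2[of y] zero_le_power2[of "y-x"] by linarith+
  have p1: "(1+y^2) powr (-a) * (1+y^2) powr a = 1" using y0 by (simp add: powr_add[symmetric])
  have p2: "(1+(y-x)^2) powr (-a) * (1+(y-x)^2) powr a = 1" using y0 by (simp add: powr_add[symmetric])
  have D: "1+x^2+\<bar>y\<bar> > 0" by (simp add: add_pos_nonneg)
  have "L2 a b x y * (1+y^2) powr a * (1+(y-x)^2) powr a
      = (1+x^2) powr b * ((1+y^2) powr (-a) * (1+y^2) powr a) * ((1+(y-x)^2) powr (-a) * (1+(y-x)^2) powr a) / (1+x^2+\<bar>y\<bar>)^2"
    unfolding L2_def by (simp add: mult_ac)
  also have "\<dots> = (1+x^2) powr b / (1+x^2+\<bar>y\<bar>)^2" unfolding p1 p2 by simp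
  finally have e: "L2 a b x y * (1+y^2) powr a * (1+(y-x)^2) powr a = (1+x^2) powr b / (1+x^2+\<bar>y\<bar>)^2" .
  have "sqrt (L2 a b x y) * sqrt ((1+y^2) powr a) * sqrt ((1+(y-x)^2) powr a) = sqrt (L2 a b x y * (1+y^2) powr a * (1+(y-x)^2) powr a)"
    by (simp add: real_sqrt_mult)
  also have "\<dots> = sqrt ((1+x^2) powr b) / (1+x^2+\<bar>y\<bar>)" unfolding e using D by (simp add: real_sqrt_divide)
  finally show ?thesis .
qed

lemma Bhat_pt:
  assumes phi: "phi_ok \<phi>" and B: "\<And>x. \<bar>\<phi> x\<bar> \<le> B" and c: "c \<ge> 6"
    and vm[measurable]: "v \<in> borel_measurable lborel"
  shows "ennreal (cmod (Bhat \<phi> c v x)) \<le> (\<integral>\<^sup>+y. ennreal (64*B^2/(1+x^2+\<bar>y\<bar>) * cmod (v y) * cmod (v (y-x))) \<partial>lborel)"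
proof -
  define h where "h y = complex_of_real (Mmult \<phi> c x y) * v y * cnj (v (y - x))" for y
  have [measurable]: "\<phi> \<in> borel_measurable borel" by (rule borel_measurable_continuous_onI[OF phi_cont[OF phi]])
  have vb[measurable]: "v \<in> borel_measurable borel" using vm by simp
  have hm[measurable]: "h \<in> borel_measurable lborel" unfolding h_def using phi by measurable
  have eq: "cmod (Bhat \<phi> c v x) = \<bar>x\<bar> * cmod (integral\<^sup>L lborel h)" unfolding Bhat_def h_def by (simp add: norm_mult)
  show ?thesis
  proof (cases "integrable lborel h")
    case True
    have "ennreal (cmod (Bhat \<phi> c v x)) = ennreal \<bar>x\<bar> * ennreal (cmod (integral\<^sup>L lborel h))"
      unfolding eq by (simp add: ennreal_mult)
    also have "\<dots> \<le> ennreal \<bar>x\<bar> * (\<integral>\<^sup>+y. ennreal (cmod (h y)) \<partial>lborel)"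
      using integral_norm_bound_ennreal[OF True] by (intro mult_left_mono) auto
    also have "\<dots> = (\<integral>\<^sup>+y. ennreal \<bar>x\<bar> * ennreal (cmod (h y)) \<partial>lborel)"
      by (rule nn_integral_cmult[symmetric]) measurable
    also have "\<dots> \<le> (\<integral>\<^sup>+y. ennreal (64*B^2/(1+x^2+\<bar>y\<bar>) * cmod (v y) * cmod (v (y-x))) \<partial>lborel)"
    proof (intro nn_integral_mono)
      fix y
      have "\<bar>x\<bar> * cmod (h y) = (\<bar>x\<bar> * \<bar>Mmult \<phi> c x y\<bar>) * (cmod (v y) * cmod (v (y-x)))"
        unfolding h_def by (simp add: norm_mult mult_ac)
      also have "\<dots> \<le> (64*B^2/(1+x^2+\<bar>y\<bar>)) * (cmod (v y) * cmod (v (y-x)))"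
        by (intro mult_right_mono Mmult_bound[OF phi B c]) auto
      finally have "\<bar>x\<bar> * cmod (h y) \<le> 64*B^2/(1+x^2+\<bar>y\<bar>) * cmod (v y) * cmod (v (y-x))" by (simp add: mult_ac)
      then show "ennreal \<bar>x\<bar> * ennreal (cmod (h y)) \<le> ennreal (64*B^2/(1+x^2+\<bar>y\<bar>) * cmod (v y) * cmod (v (y-x)))"
        by (simp add: ennreal_mult[symmetric] ennreal_leI)
    qed
    finally show ?thesis .
  next
    case False
    then have "integral\<^sup>L lborel h = 0" by (rule not_integrable_integral_eq)
    then show ?thesis unfolding eq by simp
  qed
qed



theorem lemma5p4:
  shows "\<exists>C0::nat. \<forall>c\<ge>C0. \<forall>\<phi> (s1::real) (s2::real).
     phi_ok \<phi> \<and> s1 \<ge> 0 \<and> s2 \<le> s1 + 2 \<and> s2 < 2 * s1 + 3 / 2 \<longrightarrow>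
     (\<exists>K::real. \<forall>v::real \<Rightarrow> complex.
        v \<in> borel_measurable lborel \<and> Hs_sq s1 v < \<infinity> \<longrightarrow>
        Bhat \<phi> c v \<in> borel_measurable lborel \<and>
        Hs_sq s2 (Bhat \<phi> c v) \<le> ennreal K * (Hs_sq s1 v)\<^sup>2)"
proof (intro exI[of _ "6::nat"] allI impI)
  fix c :: nat and \<phi> :: "real \<Rightarrow> real" and s1 s2 :: real
  assume c: "6 \<le> c" and H: "phi_ok \<phi> \<and> s1 \<ge> 0 \<and> s2 \<le> s1 + 2 \<and> s2 < 2 * s1 + 3 / 2"
  have phi: "phi_ok \<phi>" and s1: "s1 \<ge> 0" and s2a: "s2 \<le> s1 + 2" and s2b: "s2 < 2 * s1 + 3/2" using H by auto
  obtain B where B: "\<And>x. \<bar>\<phi> x\<bar> \<le> B" using phi_bdd[OF phi] by blast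
  define a where "a = s1"
  define b where "b = max s2 0"
  define q where "q = max a ((2*a - b + 5/2)/2)"
  have a: "a \<ge> 0" using s1 a_def by simp
  have b: "b \<ge> 0" using b_def by simp
  have qa: "q \<ge> a" using q_def by simp
  have bq: "b + q \<le> 2*a + 2" using s2a s2b s1 unfolding q_def b_def a_def by (auto simp: max_def field_simps)
  have q12: "q > 1/2" using s2b s1 unfolding q_def b_def a_def by (auto simp: max_def)
  have s2b': "s2 \<le> b" using b_def by simp
  define I where "I = (\<integral>\<^sup>+x. ennreal ((1+x^2) powr (-q)) \<partial>lborel)"
  obtain r where r: "I = ennreal r" "0 \<le> r"
    using Iq_fin[OF q12] unfolding I_def[symmetric] by (cases I rule: ennreal_cases) auto
  define K0 where "K0 = 64 * B^2"
  define Kc where "Kc = 9 * 16 powr a"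
  have K00: "K0 \<ge> 0" unfolding K0_def by simp
  have Kc0: "Kc \<ge> 0" unfolding Kc_def by simp
  show "\<exists>K::real. \<forall>v::real \<Rightarrow> complex.
        v \<in> borel_measurable lborel \<and> Hs_sq s1 v < \<infinity> \<longrightarrow>
        Bhat \<phi> c v \<in> borel_measurable lborel \<and>
        Hs_sq s2 (Bhat \<phi> c v) \<le> ennreal K * (Hs_sq s1 v)\<^sup>2"
  proof (intro exI[of _ "K0^2 * 8 * Kc * r"] allI impI conjI)
    fix v :: "real \<Rightarrow> complex"
    assume vH: "v \<in> borel_measurable lborel \<and> Hs_sq s1 v < \<infinity>"
    then have vm[measurable]: "v \<in> borel_measurable lborel" by simp
    have vb[measurable]: "v \<in> borel_measurable borel" using vm by simp
    have [measurable]: "\<phi> \<in> borel_measurable borel" by (rule borel_measurable_continuous_onI[OF phi_cont[OF phi]])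
    show Bm: "Bhat \<phi> c v \<in> borel_measurable lborel"
      unfolding Bhat_def using phi by measurable
    show "Hs_sq s2 (Bhat \<phi> c v) \<le> ennreal (K0^2 * 8 * Kc * r) * (Hs_sq s1 v)\<^sup>2"
    proof -
      define f where "f t = sqrt ((1+t^2) powr a) * cmod (v t)" for t
      have fm[measurable]: "f \<in> borel_measurable borel" unfolding f_def by measurable
      have f0: "\<And>t. f t \<ge> 0" unfolding f_def by simp
      have HF: "Hs_sq s1 v = (\<integral>\<^sup>+t. ennreal ((f t)^2) \<partial>lborel)"
        unfolding Hs_sq_def f_def a_def by (simp add: power_mult_distrib)
      define G where "G x = (\<integral>\<^sup>+y. ennreal (sqrt (L2 a b x y) * f y * f (y - x)) \<partial>lborel)" for x
      have Gm[measurable]: "G \<in> borel_measurable lborel" unfolding G_def by measurable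
      have pt: "ennreal ((1 + x^2) powr b * (cmod (Bhat \<phi> c v x))^2) \<le> ennreal (K0^2) * (G x)^2" for x
      proof -
        define S where "S = sqrt ((1+x^2) powr b)"
        have S0: "S \<ge> 0" unfolding S_def by simp
        have "ennreal ((1 + x^2) powr b * (cmod (Bhat \<phi> c v x))^2) = (ennreal S * ennreal (cmod (Bhat \<phi> c v x)))^2"
          unfolding S_def by (simp add: ennreal_mult[symmetric] ennreal_power power_mult_distrib)
        also have "\<dots> \<le> (ennreal S * (\<integral>\<^sup>+y. ennreal (64*B^2/(1+x^2+\<bar>y\<bar>) * cmod (v y) * cmod (v (y-x))) \<partial>lborel))^2"
          by (intro power_mono mult_left_mono Bhat_pt[OF phi B c vm]) auto
        also have "ennreal S * (\<integral>\<^sup>+y. ennreal (64*B^2/(1+x^2+\<bar>y\<bar>) * cmod (v y) * cmod (v (y-x))) \<partial>lborel)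
            = (\<integral>\<^sup>+y. ennreal S * ennreal (64*B^2/(1+x^2+\<bar>y\<bar>) * cmod (v y) * cmod (v (y-x))) \<partial>lborel)"
          by (rule nn_integral_cmult[symmetric]) measurable
        also have "\<dots> = (\<integral>\<^sup>+y. ennreal K0 * ennreal (sqrt (L2 a b x y) * f y * f (y - x)) \<partial>lborel)"
        proof (intro nn_integral_cong)
          fix y
          have D: "1+x^2+\<bar>y\<bar> > 0" by (simp add: add_pos_nonneg)
          have "K0 * (sqrt (L2 a b x y) * f y * f (y - x))
              = K0 * (sqrt (L2 a b x y) * sqrt ((1+y^2) powr a) * sqrt ((1+(y-x)^2) powr a)) * (cmod (v y) * cmod (v (y-x)))"
            unfolding f_def by (simp add: mult_ac)
          also have "\<dots> = S * (64*B^2/(1+x^2+\<bar>y\<bar>) * cmod (v y) * cmod (v (y-x)))"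
            unfolding sqrtL2 S_def K0_def by (simp add: field_simps)
          finally have e: "S * (64*B^2/(1+x^2+\<bar>y\<bar>) * cmod (v y) * cmod (v (y-x))) = K0 * (sqrt (L2 a b x y) * f y * f (y - x))" ..
          have n1: "0 \<le> 64*B^2/(1+x^2+\<bar>y\<bar>) * cmod (v y) * cmod (v (y-x))" using D by simp
          have n2: "0 \<le> sqrt (L2 a b x y) * f y * f (y - x)" using f0[of y] f0[of "y-x"] L2_nonneg[of a b x y] by simp
          show "ennreal S * ennreal (64*B^2/(1+x^2+\<bar>y\<bar>) * cmod (v y) * cmod (v (y-x))) = ennreal K0 * ennreal (sqrt (L2 a b x y) * f y * f (y - x))"
            using S0 K00 n1 n2 e by (simp add: ennreal_mult[symmetric])
        qed
        also have "\<dots> = ennreal K0 * G x" unfolding G_def by (rule nn_integral_cmult) measurable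
        also have "(ennreal K0 * G x)^2 = ennreal (K0^2) * (G x)^2" using K00 by (simp add: power_mult_distrib ennreal_power)
        finally show ?thesis .
      qed
      have cb: "(\<integral>\<^sup>+x. (G x)^2 \<partial>lborel) \<le> 8 * ennreal Kc * I * (Hs_sq s1 v)^2"
        unfolding G_def HF Kc_def I_def by (rule core[OF a b qa bq fm f0])
      have "Hs_sq s2 (Bhat \<phi> c v) \<le> Hs_sq b (Bhat \<phi> c v)"
        unfolding Hs_sq_def
      proof (intro nn_integral_mono ennreal_leI mult_right_mono)
        fix x :: real
        show "(1 + x^2) powr s2 \<le> (1 + x^2) powr b" using s2b' by (intro powr_mono) auto
      qed auto
      also have "\<dots> \<le> (\<integral>\<^sup>+x. ennreal (K0^2) * (G x)^2 \<partial>lborel)"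
        unfolding Hs_sq_def by (intro nn_integral_mono pt)
      also have "\<dots> = ennreal (K0^2) * (\<integral>\<^sup>+x. (G x)^2 \<partial>lborel)"
        by (rule nn_integral_cmult) measurable
      also have "\<dots> \<le> ennreal (K0^2) * (8 * ennreal Kc * I * (Hs_sq s1 v)^2)"
        by (rule mult_left_mono[OF cb]) simp
      also have "ennreal (K0^2) * (8 * ennreal Kc * I * (Hs_sq s1 v)^2) = ennreal (K0^2 * 8 * Kc * r) * (Hs_sq s1 v)^2"
        using r K00 Kc0 by (simp add: ennreal_mult mult_ac)
      finally show ?thesis .
    qed
  qed
qed


end
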